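(* Consider the domain-incremental setting described in the context, with arbitrary TII, WTP and TAP predictors and an arbitrary measurable weight function $\gamma$. Let $\delta,\epsilon,\eta\ge0$. If $\mathbb{E}_{\boldsymbol{x}\sim\mu}[H^{\gamma}_{\rm WTP}(\boldsymbol{x})]\le\delta$, $\mathbb{E}_{\boldsymbol{x}\sim\mu}[H^{\gamma}_{\rm TII}(\boldsymbol{x})]\le\epsilon$ and $\mathbb{E}_{\boldsymbol{x}\sim\mu}[H_{\rm TAP}(\boldsymbol{x})]\le\eta$, then the loss error satisfies $\mathcal L\in[0,\max\{\delta+\epsilon+\log t,\ \eta\}]$.
   Context: Domain-incremental setting (DIL). Fix integers $t\ge1$ (tasks/domains) and $m\ge1$; every task has the same class set $[m]$. Let $\mu$ be a probability distribution on an input space; each input $\boldsymbol{x}$ has a ground-truth domain $\bar i(\boldsymbol{x})\in[t]$ and a ground-truth class $\bar j(\boldsymbol{x})\in[m]$. A model provides, measurably in $\boldsymbol{x}$: a TII probability distribution $\big(P(\boldsymbol{x}\in\mathcal X_i\mid\mathcal D,\theta)\big)_{i\in[t]}$ on $[t]$; for each $i\in[t]$ a WTP probability distribution $\big(P(\boldsymbol{x}\in\mathcal X_{i,j}\mid\boldsymbol{x}\in\mathcal X_i,\mathcal D,\theta)\big)_{j\in[m]}$ on $[m]$; the induced DIL prediction $P(\boldsymbol{x}\in\mathcal X_{*,j}\mid\mathcal D,\theta)=\sum_{i\in[t]}P(\boldsymbol{x}\in\mathcal X_{i,j}\mid\boldsymbol{x}\in\mathcal X_i,\mathcal D,\theta)\,P(\boldsymbol{x}\in\mathcal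 X_i\mid\mathcal D,\theta)$ for $j\in[m]$; and a TAP probability distribution $\big(P(\boldsymbol{x}\in\mathcal X^{c}\mid\mathcal D,\theta)\big)_{c\in[m]}$ on $[m]$ (produced separately). A weight function $\gamma$ assigns to each $\boldsymbol{x}$ a point $\gamma(\boldsymbol{x})=(\gamma_i)_{i\in[t]}$ of the probability simplex on $[t]$. With conventions $-\log0=+\infty$ and $0\cdot(+\infty)=0$, define $H^{\gamma}_{\rm WTP}(\boldsymbol{x})=-\sum_{i}\gamma_i\log P(\boldsymbol{x}\in\mathcal X_{i,\bar j}\mid\boldsymbol{x}\in\mathcal X_i,\mathcal D,\theta)$, $H^{\gamma}_{\rm TII}(\boldsymbol{x})=-\sum_i\gamma_i\log P(\boldsymbol{x}\in\mathcal X_i\mid\mathcal D,\theta)$, $H_{\rm TAP}(\boldsymbol{x})=-\log P(\boldsymbol{x}\in\mathcal X^{\bar j}\mid\mathcal D,\theta)$, where $\bar j=\bar j(\boldsymbol{x})$. The loss error is $\mathcal L=\max\{\mathbb{E}_{\boldsymbol{x}\sim\mu}[-\log P(\boldsymbol{x}\in\mathcal X_{*,\bar j}\mid\mathcal D,\theta)],\ \mathbb{E}_{\boldsymbol{x}\sim\mu}[H_{\rm TAP}(\boldsymbol{x})]\}$. *)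

theory Defs
  imports "HOL-Probability.Probability"
begin

text \<open>Negative natural logarithm with the convention -log 0 = +infinity,
  valued in the extended non-negative reals (0 * infinity = 0 holds there).\<close>
definition neglog :: "real \<Rightarrow> ennreal" where
  "neglog p = (if p \<le> 0 then \<infinity> else ennreal (- ln p))"

definition is_distr :: "nat \<Rightarrow> (nat \<Rightarrow> real) \<Rightarrow> bool" where
  "is_distr n p \<longleftrightarrow> (\<forall>k<n. 0 \<le> p k) \<and> (\<Sum>k<n. p k) = 1"

text \<open>Induced DIL prediction P(x in X_{*,j}).\<close>
definition dil_pred ::
  "nat \<Rightarrow> ('a \<Rightarrow> nat \<Rightarrow> real) \<Rightarrow> ('a \<Rightarrow> nat \<Rightarrow> nat \<Rightarrow> real) \<Rightarrow> 'a \<Rightarrow> nat \<Rightarrow> real" where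
  "dil_pred t tii wtp x j = (\<Sum>i<t. wtp x i j * tii x i)"

definition H_WTP ::
  "nat \<Rightarrow> ('a \<Rightarrow> nat \<Rightarrow> real) \<Rightarrow> ('a \<Rightarrow> nat \<Rightarrow> nat \<Rightarrow> real) \<Rightarrow> ('a \<Rightarrow> nat) \<Rightarrow> 'a \<Rightarrow> ennreal" where
  "H_WTP t \<gamma> wtp jbar x = (\<Sum>i<t. ennreal (\<gamma> x i) * neglog (wtp x i (jbar x)))"

definition H_TII ::
  "nat \<Rightarrow> ('a \<Rightarrow> nat \<Rightarrow> real) \<Rightarrow> ('a \<Rightarrow> nat \<Rightarrow> real) \<Rightarrow> 'a \<Rightarrow> ennreal" where
  "H_TII t \<gamma> tii x = (\<Sum>i<t. ennreal (\<gamma> x i) * neglog (tii x i))"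

definition H_TAP :: "('a \<Rightarrow> nat \<Rightarrow> real) \<Rightarrow> ('a \<Rightarrow> nat) \<Rightarrow> 'a \<Rightarrow> ennreal" where
  "H_TAP tap jbar x = neglog (tap x (jbar x))"

definition loss_error ::
  "'a measure \<Rightarrow> nat \<Rightarrow> ('a \<Rightarrow> nat \<Rightarrow> real) \<Rightarrow> ('a \<Rightarrow> nat \<Rightarrow> nat \<Rightarrow> real)
   \<Rightarrow> ('a \<Rightarrow> nat \<Rightarrow> real) \<Rightarrow> ('a \<Rightarrow> nat) \<Rightarrow> ennreal" where
  "loss_error M t tii wtp tap jbar =
     max (\<integral>\<^sup>+ x. neglog (dil_pred t tii wtp x (jbar x)) \<partial>M)
         (\<integral>\<^sup>+ x. H_TAP tap jbar x \<partial>M)"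

end

theory Submission
  imports Defs
begin

lemma neglog_meas[measurable]: "neglog \<in> borel_measurable borel"
  unfolding neglog_def by measurable

lemma pointwise:
  assumes t: "is_distr t (tii x)" and w: "\<And>i. i < t \<Longrightarrow> is_distr m (wtp x i)"
    and g: "is_distr t (\<gamma> x)" and j: "j < m"
  shows "neglog (dil_pred t tii wtp x j) \<le>
     H_WTP t \<gamma> wtp (\<lambda>_. j) x + H_TII t \<gamma> tii x"
proof -
  have each: "neglog (dil_pred t tii wtp x j) \<le> neglog (wtp x i j) + neglog (tii x i)"
    if i: "i < t" for i
  proof (cases "wtp x i j \<le> 0 \<or> tii x i \<le> 0")
    case True then show ?thesis by (auto simp: neglog_def)
  next
    case False
    hence pw: "wtp x i j > 0" and pt: "tii x i > 0" by auto
    have nn: "\<And>k. k < t \<Longrightarrow> 0 \<le> wtp x k j * tii x k"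
      using w t j unfolding is_distr_def by auto
    have "wtp x i j * tii x i \<le> dil_pred t tii wtp x j"
      unfolding dil_pred_def using i nn by (intro member_le_sum) auto
    moreover have pp: "wtp x i j * tii x i > 0" using pw pt by simp
    ultimately have "ln (wtp x i j * tii x i) \<le> ln (dil_pred t tii wtp x j)"
      by simp
    hence "- ln (dil_pred t tii wtp x j) \<le> - ln (wtp x i j) + - ln (tii x i)"
      using pw pt by (simp add: ln_mult)
    moreover have "wtp x i j \<le> 1"
    proof -
      have "wtp x i j \<le> (\<Sum>k<m. wtp x i k)"
        using w[OF i] j unfolding is_distr_def by (intro member_le_sum) auto
      thus ?thesis using w[OF i] unfolding is_distr_def by simp
    qed
    moreover have "tii x i \<le> 1"
    proof -
      have "tii x i \<le> (\<Sum>k<t. tii x k)"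
        using t i unfolding is_distr_def by (intro member_le_sum) auto
      thus ?thesis using t unfolding is_distr_def by simp
    qed
    ultimately have le: "- ln (dil_pred t tii wtp x j) \<le> - ln (wtp x i j) + - ln (tii x i)"
      and w1: "wtp x i j \<le> 1" and t1: "tii x i \<le> 1" by auto
    have dpos: "dil_pred t tii wtp x j > 0"
      using pp \<open>wtp x i j * tii x i \<le> dil_pred t tii wtp x j\<close> by linarith
    have a: "- ln (wtp x i j) \<ge> 0" using pw w1 by simp
    have b: "- ln (tii x i) \<ge> 0" using pt t1 by simp
    have "neglog (dil_pred t tii wtp x j) = ennreal (- ln (dil_pred t tii wtp x j))"
      using dpos by (simp add: neglog_def)
    also have "\<dots> \<le> ennreal (- ln (wtp x i j) + - ln (tii x i))" using le by (rule ennreal_leI)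
    also have "\<dots> = ennreal (- ln (wtp x i j)) + ennreal (- ln (tii x i))"
      using a b by (rule ennreal_plus)
    also have "\<dots> = neglog (wtp x i j) + neglog (tii x i)"
      using pw pt by (simp add: neglog_def)
    finally show ?thesis .
  qed
  have gs: "(\<Sum>i<t. ennreal (\<gamma> x i)) = 1"
    using g unfolding is_distr_def by (subst sum_ennreal) auto
  have "neglog (dil_pred t tii wtp x j) = (\<Sum>i<t. ennreal (\<gamma> x i) * neglog (dil_pred t tii wtp x j))"
    by (simp add: sum_distrib_right[symmetric] gs)
  also have "\<dots> \<le> (\<Sum>i<t. ennreal (\<gamma> x i) * (neglog (wtp x i j) + neglog (tii x i)))"
    by (intro sum_mono mult_left_mono each) auto
  also have "\<dots> = H_WTP t \<gamma> wtp (\<lambda>_. j) x + H_TII t \<gamma> tii x"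
    unfolding H_WTP_def H_TII_def by (simp add: distrib_left sum.distrib)
  finally show ?thesis .
qed

theorem theorem4:
  fixes M :: "'a measure" and t m :: nat
    and ibar jbar :: "'a \<Rightarrow> nat"
    and tii :: "'a \<Rightarrow> nat \<Rightarrow> real"
    and wtp :: "'a \<Rightarrow> nat \<Rightarrow> nat \<Rightarrow> real"
    and tap :: "'a \<Rightarrow> nat \<Rightarrow> real"
    and \<gamma> :: "'a \<Rightarrow> nat \<Rightarrow> real"
    and \<delta> \<epsilon> \<eta> :: real
  assumes "prob_space M"
    and "t \<ge> 1" and "m \<ge> 1"
    and "ibar \<in> measurable M (count_space UNIV)" and "\<And>x. ibar x < t"
    and "jbar \<in> measurable M (count_space UNIV)" and "\<And>x. jbar x < m"
    and "\<And>i. (\<lambda>x. tii x i) \<in> borel_measurable M"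
    and "\<And>i j. (\<lambda>x. wtp x i j) \<in> borel_measurable M"
    and "\<And>c. (\<lambda>x. tap x c) \<in> borel_measurable M"
    and "\<And>i. (\<lambda>x. \<gamma> x i) \<in> borel_measurable M"
    and "\<And>x. is_distr t (tii x)"
    and "\<And>x i. i < t \<Longrightarrow> is_distr m (wtp x i)"
    and "\<And>x. is_distr m (tap x)"
    and "\<And>x. is_distr t (\<gamma> x)"
    and "\<delta> \<ge> 0" and "\<epsilon> \<ge> 0" and "\<eta> \<ge> 0"
    and "(\<integral>\<^sup>+ x. H_WTP t \<gamma> wtp jbar x \<partial>M) \<le> ennreal \<delta>"
    and "(\<integral>\<^sup>+ x. H_TII t \<gamma> tii x \<partial>M) \<le> ennreal \<epsilon>"
    and "(\<integral>\<^sup>+ x. H_TAP tap jbar x \<partial>M) \<le> ennreal \<eta>"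
  shows "0 \<le> loss_error M t tii wtp tap jbar \<and>
         loss_error M t tii wtp tap jbar \<le> ennreal (max (\<delta> + \<epsilon> + ln (real t)) \<eta>)"
proof -
  have pw: "neglog (dil_pred t tii wtp x (jbar x)) \<le> H_WTP t \<gamma> wtp jbar x + H_TII t \<gamma> tii x" for x
    using pointwise[of t tii x m wtp \<gamma> "jbar x"] assms(12,13,15,7)
    unfolding H_WTP_def by simp
  have mW: "H_WTP t \<gamma> wtp jbar \<in> borel_measurable M"
  proof -
    have "(\<lambda>x. wtp x i (jbar x)) \<in> borel_measurable M" for i
      by (rule measurable_compose_countable[where f="\<lambda>j x. wtp x i j", OF assms(9) assms(6)])
    thus ?thesis unfolding H_WTP_def using assms(11) by measurable
  qed
  have mT: "H_TII t \<gamma> tii \<in> borel_measurable M"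
    unfolding H_TII_def using assms(8,11) by measurable
  have "(\<integral>\<^sup>+ x. neglog (dil_pred t tii wtp x (jbar x)) \<partial>M) \<le> (\<integral>\<^sup>+ x. H_WTP t \<gamma> wtp jbar x + H_TII t \<gamma> tii x \<partial>M)"
    by (intro nn_integral_mono pw)
  also have "\<dots> = (\<integral>\<^sup>+ x. H_WTP t \<gamma> wtp jbar x \<partial>M) + (\<integral>\<^sup>+ x. H_TII t \<gamma> tii x \<partial>M)"
    using mW mT by (simp add: nn_integral_add)
  also have "\<dots> \<le> ennreal \<delta> + ennreal \<epsilon>" using assms(19,20) by (intro add_mono)
  also have "\<dots> = ennreal (\<delta> + \<epsilon>)" using assms(16,17) by simp
  also have "\<dots> \<le> ennreal (max (\<delta> + \<epsilon> + ln (real t)) \<eta>)"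
  proof (rule ennreal_leI)
    have "real t \<ge> 1" using assms(2) by simp
    hence "ln (real t) \<ge> 0" by (rule ln_ge_zero)
    thus "\<delta> + \<epsilon> \<le> max (\<delta> + \<epsilon> + ln (real t)) \<eta>" by linarith
  qed
  finally have A: "(\<integral>\<^sup>+ x. neglog (dil_pred t tii wtp x (jbar x)) \<partial>M) \<le> ennreal (max (\<delta> + \<epsilon> + ln (real t)) \<eta>)" .
  have B: "(\<integral>\<^sup>+ x. H_TAP tap jbar x \<partial>M) \<le> ennreal (max (\<delta> + \<epsilon> + ln (real t)) \<eta>)"
  proof -
    have "ennreal \<eta> \<le> ennreal (max (\<delta> + \<epsilon> + ln (real t)) \<eta>)"
      by (rule ennreal_leI) simp
    thus ?thesis by (rule order_trans[OF assms(21)])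
  qed
  show ?thesis unfolding loss_error_def using A B by (simp only: max.bounded_iff zero_le simp_thms)
qed

end
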